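(* Let $H=(V,f)$ be a separated labeled hypergraph, let $W\subseteq V$ be the set of vertices of $H$ that are not closed, and let $H'=H|_W$ be the induced subhypergraph obtained by removing all closed vertices (and contracting the edges containing them). Then $\mathcal A[H]=k[H]$ if and only if $\mathcal A[H']=k[H']$.
   Context: Let $k$ be a field and $S=k[x_1,\dots,x_n,y]$. For an integral convex polytope $\mathcal P\subseteq\mathbb R^n_{\ge 0}$, the Ehrhart ring $\mathcal A[\mathcal P]$ is the $k$-subspace (a subalgebra) of $S$ spanned by the monomials $x^{\mathbf a}y^t$ with $t\in\mathbb N$ and $\mathbf a\in t\mathcal P\cap\mathbb Z^n$; the polytopal (toric) ring is $k[\mathcal P]=k[x^{\mathbf a}y:\mathbf a\in\mathcal P\cap\mathbb Z^n]\subseteq S$. A labeled hypergraph $H=(V,f)$ on a finite set $V$ with alphabet $\{x_1,\dots,x_n\}$ is a function $f:\{x_1,\dots,x_n\}\to\mathcal P(V)$; its edges are the nonempty sets in the image of $f$, and the labels of an edge $E$ are the $x$ with $f(x)=E$. $H$ is separated if for all distinct $v,w\in V$ there are edges $F,G$ with $v\in F\setminus G$, $w\in G\setminus F$. For separated $H$, let $m_v=\prod_{x:\,v\in f(x)}x=x^{\mathbf a_v}$ ($v\in V$), let $\mathcal P_H$ be the convex hull of $\{\mathbf a_v:v\in V\}$ (a 0-1 polytope), and set $\mathcal A[H]=\mathcal A[\mathcal P_H]$, $k[H]=k[\mathcal P_H]$. A vertex $v$ is closed if $\{v\}$ is an edge of $H$. For $W\subseteq V$, the induced subhypergraph is $H|_W=(W,f_W)$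 with $f_W(x)=f(x)\cap W$ (it is again separated). *)

theory Defs
  imports "HOL-Analysis.Analysis" "HOL-Library.Poly_Mapping"
begin

text \<open>Polynomial ring S = k[x_i (i :: 'n), y]: elements are finitely supported maps from
  exponent vectors (finitely supported maps 'n option => nat, where Some i stands for x_i
  and None stands for y) to coefficients in k.\<close>

type_synonym ('n, 'k) Spoly = "('n option \<Rightarrow>\<^sub>0 nat) \<Rightarrow>\<^sub>0 'k"

definition expo :: "('n::finite \<Rightarrow> nat) \<Rightarrow> nat \<Rightarrow> ('n option \<Rightarrow>\<^sub>0 nat)" where
  "expo a t = Poly_Mapping.single None t + (\<Sum>i\<in>UNIV. Poly_Mapping.single (Some i) (a i))"

definition monom_S :: "('n option \<Rightarrow>\<^sub>0 nat) \<Rightarrow> ('n, 'k::field) Spoly" where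
  "monom_S m = Poly_Mapping.single m 1"

definition monomial_span :: "('n option \<Rightarrow>\<^sub>0 nat) set \<Rightarrow> ('n, 'k::field) Spoly set" where
  "monomial_span E = {(\<Sum>m\<in>M. Poly_Mapping.single 0 (c m) * monom_S m) | M c. finite M \<and> M \<subseteq> E}"

inductive_set alg_gen :: "('n, 'k::field) Spoly set \<Rightarrow> ('n, 'k) Spoly set" for G where
  gen: "g \<in> G \<Longrightarrow> g \<in> alg_gen G"
| one: "1 \<in> alg_gen G"
| scal: "p \<in> alg_gen G \<Longrightarrow> Poly_Mapping.single 0 c * p \<in> alg_gen G"
| add: "p \<in> alg_gen G \<Longrightarrow> q \<in> alg_gen G \<Longrightarrow> p + q \<in> alg_gen G"
| mult: "p \<in> alg_gen G \<Longrightarrow> q \<in> alg_gen G \<Longrightarrow> p * q \<in> alg_gen G"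

definition ofv :: "('n::finite \<Rightarrow> nat) \<Rightarrow> real^'n" where
  "ofv a = (\<chi> i. real (a i))"

text \<open>Exponents of the monomials x^a y^t with a in tP (lattice point); the pair (0,0)
  (monomial 1) is always included, i.e. 0P = {0} by convention.\<close>
definition ehrhart_exps :: "(real^'n::finite) set \<Rightarrow> ('n option \<Rightarrow>\<^sub>0 nat) set" where
  "ehrhart_exps P = {expo a t | a t. ofv a \<in> (\<lambda>x. real t *\<^sub>R x) ` P \<or> (t = 0 \<and> a = (\<lambda>_. 0))}"

definition ehrhart_ring :: "(real^'n::finite) set \<Rightarrow> ('n, 'k::field) Spoly set" where
  "ehrhart_ring P = monomial_span (ehrhart_exps P)"

definition polytopal_ring :: "(real^'n::finite) set \<Rightarrow> ('n, 'k::field) Spoly set" where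
  "polytopal_ring P = alg_gen {monom_S (expo a 1) | a. ofv a \<in> P}"

definition labeled_hypergraph :: "'v set \<Rightarrow> ('n \<Rightarrow> 'v set) \<Rightarrow> bool" where
  "labeled_hypergraph V f \<longleftrightarrow> finite V \<and> (\<forall>x. f x \<subseteq> V)"

definition hg_edges :: "('n \<Rightarrow> 'v set) \<Rightarrow> 'v set set" where
  "hg_edges f = {E. E \<in> range f \<and> E \<noteq> {}}"

definition separated :: "'v set \<Rightarrow> ('n \<Rightarrow> 'v set) \<Rightarrow> bool" where
  "separated V f \<longleftrightarrow> (\<forall>v\<in>V. \<forall>w\<in>V. v \<noteq> w \<longrightarrow>
      (\<exists>F\<in>hg_edges f. \<exists>G\<in>hg_edges f. v \<in> F - G \<and> w \<in> G - F))"

definition closed_vertex :: "('n \<Rightarrow> 'v set) \<Rightarrow> 'v \<Rightarrow> bool" where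
  "closed_vertex f v \<longleftrightarrow> {v} \<in> hg_edges f"

definition induced :: "('n \<Rightarrow> 'v set) \<Rightarrow> 'v set \<Rightarrow> ('n \<Rightarrow> 'v set)" where
  "induced f W = (\<lambda>x. f x \<inter> W)"

definition vertex_vec :: "('n::finite \<Rightarrow> 'v set) \<Rightarrow> 'v \<Rightarrow> real^'n" where
  "vertex_vec f v = (\<chi> x. if v \<in> f x then 1 else 0)"

definition hg_polytope :: "'v set \<Rightarrow> ('n::finite \<Rightarrow> 'v set) \<Rightarrow> (real^'n) set" where
  "hg_polytope V f = convex hull (vertex_vec f ` V)"

end

theory Submission
  imports Defs
begin
lemma keys_sum_gen: "Poly_Mapping.keys (sum b I) \<subseteq> (\<Union>i \<in>I. Poly_Mapping.keys (b i :: 'a \<Rightarrow>\<^sub>0 'b::comm_monoid_add))"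
proof (induction I rule: infinite_finite_induct)
  case (insert i I)
  then show ?case
    using keys_add [of "b i" "sum b I"] by auto
qed auto

lemma sum_monoms: "(\<Sum>m\<in>Poly_Mapping.keys p. Poly_Mapping.single m (Poly_Mapping.lookup p m)) = (p::('a \<Rightarrow>\<^sub>0 'b::comm_monoid_add))"
proof (rule poly_mapping_eqI)
  fix k
  have "Poly_Mapping.lookup (\<Sum>m\<in>Poly_Mapping.keys p. Poly_Mapping.single m (Poly_Mapping.lookup p m)) k = (\<Sum>m\<in>Poly_Mapping.keys p. if m = k then Poly_Mapping.lookup p m else 0)"
    by (simp add: lookup_sum lookup_single when_def)
  also have "\<dots> = Poly_Mapping.lookup p k"
    by (cases "k \<in> Poly_Mapping.keys p") (auto simp: in_keys_iff)
  finally show "Poly_Mapping.lookup (\<Sum>m\<in>Poly_Mapping.keys p. Poly_Mapping.single m (Poly_Mapping.lookup p m)) k = Poly_Mapping.lookup p k" .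
qed

lemma single_scal: "Poly_Mapping.single 0 c * monom_S m = Poly_Mapping.single m (c::'k::field)"
  by (simp add: monom_S_def mult_single)

lemma monomial_span_keys: "monomial_span E = {p :: ('n, 'k::field) Spoly. Poly_Mapping.keys p \<subseteq> E}"
proof (intro set_eqI iffI)
  fix p :: "('n, 'k) Spoly" assume "p \<in> monomial_span E"
  then obtain M c where p: "p = (\<Sum>m\<in>M. Poly_Mapping.single m (c m))" "M \<subseteq> E"
    unfolding monomial_span_def single_scal by auto
  have "Poly_Mapping.keys p \<subseteq> (\<Union>m\<in>M. Poly_Mapping.keys (Poly_Mapping.single m (c m)))" unfolding p by (rule keys_sum_gen)
  also have "\<dots> \<subseteq> M" by auto
  finally show "p \<in> {p. Poly_Mapping.keys p \<subseteq> E}" using p by auto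
next
  fix p :: "('n, 'k) Spoly" assume "p \<in> {p. Poly_Mapping.keys p \<subseteq> E}"
  then show "p \<in> monomial_span E" unfolding monomial_span_def single_scal
    by (intro CollectI exI[of _ "Poly_Mapping.keys p"] exI[of _ "Poly_Mapping.lookup p"]) (auto simp: sum_monoms)
qed


inductive_set Mset :: "(real^'n::finite) set \<Rightarrow> (('n \<Rightarrow> nat) \<times> nat) set" for P where
  zero: "((\<lambda>_. 0), 0) \<in> Mset P"
| step: "(a, k) \<in> Mset P \<Longrightarrow> ofv b \<in> P \<Longrightarrow> ((\<lambda>j. a j + b j), Suc k) \<in> Mset P"

definition Eset :: "(real^'n::finite) set \<Rightarrow> (('n \<Rightarrow> nat) \<times> nat) set" where
  "Eset P = {(a, k). ofv a \<in> (\<lambda>x. real k *\<^sub>R x) ` P \<or> (k = 0 \<and> a = (\<lambda>_. 0))}"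

lemma Mset_add: "(b, l) \<in> Mset P \<Longrightarrow> (a, k) \<in> Mset P \<Longrightarrow> ((\<lambda>j. a j + b j), k + l) \<in> Mset P"
proof (induction rule: Mset.induct)
  case zero then show ?case by simp
next
  case (step b l c)
  have "((\<lambda>j. (a j + b j) + c j), Suc (k + l)) \<in> Mset P"
    using step by (intro Mset.step) auto
  then show ?case by (simp add: add.assoc)
qed

lemma Mset_mono: "(a, k) \<in> Mset P \<Longrightarrow> P \<subseteq> Q \<Longrightarrow> (a, k) \<in> Mset Q"
  by (induction rule: Mset.induct) (auto intro: Mset.intros)

lemma expo_add: "expo a t + expo b s = expo (\<lambda>j. a j + b j) (t + s)"
  by (simp add: expo_def single_add sum.distrib algebra_simps)

lemma expo_zero: "expo (\<lambda>_. 0) 0 = 0"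
  by (simp add: expo_def)

lemma lookup_expo_None: "Poly_Mapping.lookup (expo a t) None = t"
  by (simp add: expo_def lookup_add lookup_sum lookup_single)

lemma lookup_expo_Some: "Poly_Mapping.lookup (expo a t) (Some i) = a i"
proof -
  have "Poly_Mapping.lookup (expo a t) (Some i) = (\<Sum>j\<in>UNIV. if j = i then a j else 0)"
    by (simp add: expo_def lookup_add lookup_sum lookup_single when_def)
  also have "\<dots> = a i" by simp
  finally show ?thesis .
qed

lemma expo_inj: "expo a t = expo b s \<longleftrightarrow> a = b \<and> t = s"
proof
  assume h: "expo a t = expo b s"
  have "a = b" using arg_cong[OF h, of "\<lambda>p. Poly_Mapping.lookup p (Some _)"]
    by (auto simp: lookup_expo_Some)
  moreover have "t = s" using arg_cong[OF h, of "\<lambda>p. Poly_Mapping.lookup p None"]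
    by (simp add: lookup_expo_None)
  ultimately show "a = b \<and> t = s" by simp
qed simp

lemma monom_S_add: "monom_S (m1 + m2) = (monom_S m1 * monom_S m2 :: ('n, 'k::field) Spoly)"
  by (simp add: monom_S_def mult_single)

lemma alg_gen_zero: "0 \<in> alg_gen G"
proof -
  have "Poly_Mapping.single 0 0 * 1 \<in> alg_gen G" by (intro alg_gen.scal alg_gen.one)
  then show ?thesis by simp
qed

lemma alg_gen_sum: "finite A \<Longrightarrow> (\<And>x. x \<in> A \<Longrightarrow> g x \<in> alg_gen G) \<Longrightarrow> sum g A \<in> alg_gen G"
  by (induction A rule: finite_induct) (auto intro: alg_gen.intros alg_gen_zero)

lemma polytopal_keys:
  "polytopal_ring P = {p :: ('n::finite, 'k::field) Spoly. Poly_Mapping.keys p \<subseteq> (\<lambda>(a, k). expo a k) ` Mset P}"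
proof (intro set_eqI iffI)
  fix p :: "('n, 'k) Spoly"
  assume "p \<in> polytopal_ring P"
  then show "p \<in> {p. Poly_Mapping.keys p \<subseteq> (\<lambda>(a, k). expo a k) ` Mset P}"
    unfolding polytopal_ring_def
  proof (induction rule: alg_gen.induct)
    case (gen g)
    then obtain a where g: "g = monom_S (expo a 1)" "ofv a \<in> P" by auto
    have "((\<lambda>j. 0 + a j), Suc 0) \<in> Mset P" by (rule Mset.step[OF Mset.zero g(2)])
    then have "(a, 1) \<in> Mset P" by simp
    then show ?case using g by (force simp: monom_S_def)
  next
    case one
    have "(0::'n option \<Rightarrow>\<^sub>0 nat) = (\<lambda>(a, k). expo a k) ((\<lambda>_. 0), 0)" by (simp add: expo_zero)
    then show ?case using Mset.zero[of P] by (auto intro: rev_image_eqI)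
  next
    case (scal p c)
    have "Poly_Mapping.keys (Poly_Mapping.single 0 c * p) \<subseteq> {a + b |a b. a \<in> Poly_Mapping.keys (Poly_Mapping.single 0 c) \<and> b \<in> Poly_Mapping.keys p}"
      by (rule keys_mult)
    also have "\<dots> \<subseteq> Poly_Mapping.keys p" by auto
    finally show ?case using scal by auto
  next
    case (add p q)
    then show ?case using keys_add[of p q] by auto
  next
    case (mult p q)
    have "Poly_Mapping.keys (p * q) \<subseteq> {a + b |a b. a \<in> Poly_Mapping.keys p \<and> b \<in> Poly_Mapping.keys q}"
      by (rule keys_mult)
    also have "\<dots> \<subseteq> (\<lambda>(a, k). expo a k) ` Mset P"
    proof clarify
      fix x y assume "x \<in> Poly_Mapping.keys p" "y \<in> Poly_Mapping.keys q"
      then obtain a k b l where "x = expo a k" "(a, k) \<in> Mset P" "y = expo b l" "(b, l) \<in> Mset P"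
      proof -
        obtain ak where "ak \<in> Mset P" "x = (\<lambda>(a, k). expo a k) ak" using mult \<open>x \<in> _\<close> by blast
        moreover obtain bl where "bl \<in> Mset P" "y = (\<lambda>(a, k). expo a k) bl" using mult \<open>y \<in> _\<close> by blast
        ultimately show thesis using that by (cases ak; cases bl) auto
      qed
      then show "x + y \<in> (\<lambda>(a, k). expo a k) ` Mset P"
        using Mset_add[of b l P a k] by (force simp: expo_add)
    qed
    finally show ?case by simp
  qed
next
  fix p :: "('n, 'k) Spoly"
  assume h: "p \<in> {p. Poly_Mapping.keys p \<subseteq> (\<lambda>(a, k). expo a k) ` Mset P}"
  have mon: "monom_S (expo a k) \<in> (polytopal_ring P :: ('n, 'k) Spoly set)" if "(a, k) \<in> Mset P" for a k
    using that
  proof (induction rule: Mset.induct)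
    case zero then show ?case
      by (simp add: expo_zero monom_S_def polytopal_ring_def alg_gen.one)
  next
    case (step a k b)
    have e: "monom_S (expo (\<lambda>j. a j + b j) (Suc k)) = (monom_S (expo a k) * monom_S (expo b 1) :: ('n, 'k) Spoly)"
      by (simp only: monom_S_add[symmetric] expo_add) simp
    have g: "monom_S (expo b 1) \<in> (polytopal_ring P :: ('n, 'k) Spoly set)"
      using step by (auto simp: polytopal_ring_def intro: alg_gen.gen)
    have "monom_S (expo a k) * monom_S (expo b 1) \<in> (polytopal_ring P :: ('n, 'k) Spoly set)"
      using alg_gen.mult[OF step.IH[unfolded polytopal_ring_def] g[unfolded polytopal_ring_def]] unfolding polytopal_ring_def .
    then show ?case by (simp only: e)
  qed
  have "p = (\<Sum>m\<in>Poly_Mapping.keys p. Poly_Mapping.single 0 (Poly_Mapping.lookup p m) * monom_S m)"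
    by (simp add: single_scal sum_monoms)
  also have "\<dots> \<in> polytopal_ring P" unfolding polytopal_ring_def
  proof (rule alg_gen_sum)
    fix m assume "m \<in> Poly_Mapping.keys p"
    then obtain a k where "m = expo a k" "(a, k) \<in> Mset P" using h by auto
    then show "Poly_Mapping.single 0 (Poly_Mapping.lookup p m) * monom_S m \<in> alg_gen {monom_S (expo a 1) |a. ofv a \<in> P}"
      using mon unfolding polytopal_ring_def by (auto intro: alg_gen.scal)
  qed simp
  finally show "p \<in> polytopal_ring P" .
qed

lemma ehrhart_keys:
  "ehrhart_ring P = {p :: ('n::finite, 'k::field) Spoly. Poly_Mapping.keys p \<subseteq> (\<lambda>(a, k). expo a k) ` Eset P}"
proof -
  have "ehrhart_exps P = (\<lambda>(a, k). expo a k) ` Eset P"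
    unfolding ehrhart_exps_def Eset_def by force
  then show ?thesis unfolding ehrhart_ring_def monomial_span_keys by simp
qed

lemma keysets_eq: "{p :: ('a \<Rightarrow>\<^sub>0 'k::field). Poly_Mapping.keys p \<subseteq> X} = {p. Poly_Mapping.keys p \<subseteq> Y} \<longleftrightarrow> X = Y"
proof
  assume h: "{p :: ('a \<Rightarrow>\<^sub>0 'k::field). Poly_Mapping.keys p \<subseteq> X} = {p. Poly_Mapping.keys p \<subseteq> Y}"
  have "m \<in> X \<longleftrightarrow> m \<in> Y" for m
    using h[THEN equalityD1, THEN subsetD, of "Poly_Mapping.single m 1"]
          h[THEN equalityD2, THEN subsetD, of "Poly_Mapping.single m 1"] by auto
  then show "X = Y" by auto
qed simp

lemma ofv_add: "ofv (\<lambda>j. a j + b j) = ofv a + ofv b"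
  by (simp add: ofv_def vec_eq_iff)

lemma ofv_zero_iff: "ofv a = 0 \<longleftrightarrow> a = (\<lambda>_. 0)"
  by (auto simp: ofv_def vec_eq_iff)

lemma Mset_Eset: assumes "convex P" shows "(a, k) \<in> Mset P \<Longrightarrow> (a, k) \<in> Eset P"
proof (induction rule: Mset.induct)
  case zero then show ?case by (simp add: Eset_def)
next
  case (step a k b)
  show ?case
  proof (cases "k = 0")
    case True
    with step have "a = (\<lambda>_. 0)" by (auto simp: Eset_def ofv_zero_iff)
    then show ?thesis using step True by (auto simp: Eset_def)
  next
    case False
    then obtain x where x: "x \<in> P" "ofv a = real k *\<^sub>R x" using step by (auto simp: Eset_def)
    define u where "u = real k / real (Suc k)"
    define v where "v = 1 / real (Suc k)"
    have "u *\<^sub>R x + v *\<^sub>R ofv b \<in> P"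
      using assms x step unfolding convex_def u_def v_def
      by (auto simp: field_simps)
    moreover have "ofv (\<lambda>j. a j + b j) = real (Suc k) *\<^sub>R (u *\<^sub>R x + v *\<^sub>R ofv b)"
      by (simp add: ofv_add x u_def v_def scaleR_add_right)
    ultimately show ?thesis by (auto simp: Eset_def)
  qed
qed

lemma ring_iff:
  assumes "convex P"
  shows "(ehrhart_ring P = (polytopal_ring P :: ('n::finite, 'k::field) Spoly set)) \<longleftrightarrow> Eset P \<subseteq> Mset P"
proof -
  have inj: "inj (\<lambda>(a, k). expo a k)" by (auto simp: inj_def expo_inj)
  have "Mset P \<subseteq> Eset P" using Mset_Eset[OF assms] by auto
  then show ?thesis
    unfolding ehrhart_keys polytopal_keys keysets_eq inj_image_eq_iff[OF inj] by auto
qed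

locale pyr =
  fixes S :: "(real^'n::finite) set" and t :: "real^'n" and i :: 'n
  assumes fin: "finite S" and tS: "t \<in> S" and ti: "t $ i = 1"
    and oth: "\<And>s. s \<in> S \<Longrightarrow> s \<noteq> t \<Longrightarrow> s $ i = 0"
    and lat: "\<And>s. s \<in> S \<Longrightarrow> \<exists>b. ofv b = s"
begin

lemma coord_i: "(\<Sum>s\<in>S. u s *\<^sub>R s) $ i = u t"
proof -
  have "(\<Sum>s\<in>S. u s *\<^sub>R s) $ i = (\<Sum>s\<in>S. if s = t then u s else 0)"
    by (auto intro!: sum.cong simp: ti oth)
  also have "\<dots> = u t" using fin tS by simp
  finally show ?thesis .
qed

lemma G1: assumes "y \<in> convex hull S" "y $ i = 0" shows "y \<in> convex hull (S - {t})"
proof -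
  obtain u where u: "\<forall>x\<in>S. 0 \<le> u x" "sum u S = 1" "(\<Sum>x\<in>S. u x *\<^sub>R x) = y"
    using assms(1) convex_hull_finite[OF fin] by auto
  have ut: "u t = 0" using coord_i[of u] u(3) assms(2) by simp
  have "sum u (S - {t}) = 1" using u(2) ut sum.remove[OF fin tS, of u] by simp
  moreover have "(\<Sum>x\<in>S - {t}. u x *\<^sub>R x) = y" using u(3) ut sum.remove[OF fin tS, of "\<lambda>x. u x *\<^sub>R x"] by simp
  ultimately show ?thesis using u(1) convex_hull_finite[of "S - {t}"] fin by auto
qed

lemma G0: assumes "y \<in> convex hull (S - {t})" shows "y $ i = 0"
proof -
  obtain u where u: "\<forall>x\<in>S-{t}. 0 \<le> u x" "sum u (S-{t}) = 1" "(\<Sum>x\<in>S-{t}. u x *\<^sub>R x) = y"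
    using assms convex_hull_finite[of "S - {t}"] fin by auto
  then show ?thesis using oth by auto
qed

lemma D: "(a, k) \<in> Mset (convex hull S) \<Longrightarrow> a i = 0 \<Longrightarrow> (a, k) \<in> Mset (convex hull (S - {t}))"
proof (induction rule: Mset.induct)
  case zero show ?case by (rule Mset.zero)
next
  case (step a k b)
  have "(ofv b) $ i = 0" using step by (simp add: ofv_def)
  then have "ofv b \<in> convex hull (S - {t})" using G1 step by blast
  then show ?case using step by (intro Mset.step) auto
qed

lemma Mset_rep: "(a, k) \<in> Mset P \<Longrightarrow> ofv b \<in> P \<Longrightarrow> ((\<lambda>j. a j + m * b j), k + m) \<in> Mset P"
proof (induction m)
  case 0 then show ?case by simp
next
  case (Suc m)
  have "((\<lambda>j. (a j + m * b j) + b j), Suc (k + m)) \<in> Mset P"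
    using Suc by (intro Mset.step) auto
  then show ?case by (simp add: algebra_simps)
qed

lemma nonneg: "s \<in> S \<Longrightarrow> 0 \<le> s $ j"
  using lat[of s] by (auto simp: ofv_def)

lemma dir1: assumes "Eset (convex hull S) \<subseteq> Mset (convex hull S)"
  shows "Eset (convex hull (S - {t})) \<subseteq> Mset (convex hull (S - {t}))"
proof clarify
  fix a k assume ak: "(a, k) \<in> Eset (convex hull (S - {t}))"
  show "(a, k) \<in> Mset (convex hull (S - {t}))"
  proof (cases "k = 0 \<and> a = (\<lambda>_. 0)")
    case True then show ?thesis using Mset.zero by auto
  next
    case False
    then obtain x where x: "x \<in> convex hull (S - {t})" "ofv a = real k *\<^sub>R x"
      using ak by (auto simp: Eset_def)
    have "x \<in> convex hull S" using x(1) hull_mono[of "S - {t}" S] by auto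
    then have "(a, k) \<in> Eset (convex hull S)" using x by (auto simp: Eset_def)
    then have "(a, k) \<in> Mset (convex hull S)" using assms by auto
    moreover have "a i = 0"
    proof -
      have "real (a i) = (ofv a) $ i" by (simp add: ofv_def)
      also have "\<dots> = 0" using x G0 by simp
      finally show ?thesis by simp
    qed
    ultimately show ?thesis by (rule D)
  qed
qed


lemma dir2: assumes IH: "Eset (convex hull (S - {t})) \<subseteq> Mset (convex hull (S - {t}))"
  shows "Eset (convex hull S) \<subseteq> Mset (convex hull S)"
proof clarify
  fix a k assume ak: "(a, k) \<in> Eset (convex hull S)"
  show "(a, k) \<in> Mset (convex hull S)"
  proof (cases "a = (\<lambda>_. 0) \<and> k = 0")
    case True then show ?thesis using Mset.zero by auto
  next
    case False
    then obtain y where y: "y \<in> convex hull S" "ofv a = real k *\<^sub>R y"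
      using ak by (auto simp: Eset_def)
    have kpos: "k > 0"
    proof (rule ccontr)
      assume "\<not> k > 0"
      then have "k = 0" by simp
      then have "a = (\<lambda>_. 0)" using y ofv_zero_iff by auto
      then show False using False \<open>k = 0\<close> by simp
    qed
    obtain u where u: "\<forall>x\<in>S. 0 \<le> u x" "sum u S = 1" "(\<Sum>x\<in>S. u x *\<^sub>R x) = y"
      using y(1) convex_hull_finite[OF fin] by auto
    define S0 where "S0 = S - {t}"
    have finS0: "finite S0" using fin by (simp add: S0_def)
    define z where "z = (\<Sum>x\<in>S0. u x *\<^sub>R x)"
    have ysplit: "y = u t *\<^sub>R t + z"
      using u(3) sum.remove[OF fin tS, of "\<lambda>x. u x *\<^sub>R x"] by (simp add: z_def S0_def)
    have usplit: "u t + sum u S0 = 1"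
      using u(2) sum.remove[OF fin tS, of u] by (simp add: S0_def)
    have sum0: "sum u S0 \<ge> 0" using u(1) by (auto simp: S0_def intro: sum_nonneg)
    have ut: "0 \<le> u t" "u t \<le> 1" using u(1) tS sum0 usplit by auto
    have znn: "0 \<le> z $ j" for j
      unfolding z_def using u(1) nonneg by (auto simp: S0_def intro!: sum_nonneg)
    have zi: "z $ i = 0"
      unfolding z_def using oth by (auto simp: S0_def)
    define m where "m = a i"
    have mreal: "real m = real k * u t"
    proof -
      have "real m = (ofv a) $ i" by (simp add: ofv_def m_def)
      also have "\<dots> = real k * u t" using y ysplit zi ti by simp
      finally show ?thesis .
    qed
    obtain bt where bt: "ofv bt = t" using lat tS by blast
    have bti: "bt i = 1" using arg_cong[OF bt, of "\<lambda>v. v $ i"] ti by (simp add: ofv_def)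
    define a' where "a' = (\<lambda>j. a j - m * bt j)"
    have ge: "m * bt j \<le> a j" for j
    proof -
      have "real (a j) = (ofv a) $ j" by (simp add: ofv_def)
      also have "\<dots> = real k * u t * t $ j + real k * z $ j" using y ysplit by (simp add: algebra_simps)
      also have "\<dots> \<ge> real k * u t * t $ j" using znn[of j] by simp
      finally have "real (a j) \<ge> real m * real (bt j)"
        using mreal arg_cong[OF bt, of "\<lambda>v. v $ j"] by (simp add: ofv_def)
      then show ?thesis by (metis of_nat_le_iff of_nat_mult)
    qed
    have a'eq: "(\<lambda>j. a' j + m * bt j) = a" using ge by (auto simp: a'_def)
    have ofva': "ofv a' = real k *\<^sub>R z"
    proof -
      have "ofv a' $ j = (real k *\<^sub>R z) $ j" for j
      proof -
        have "ofv a' $ j = real (a j) - real m * real (bt j)" using ge[of j] by (simp add: ofv_def a'_def of_nat_diff)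
        also have "\<dots> = (ofv a) $ j - real k * u t * t $ j"
          using mreal arg_cong[OF bt, of "\<lambda>v. v $ j"] by (simp add: ofv_def)
        also have "\<dots> = (real k *\<^sub>R z) $ j" using y ysplit by (simp add: algebra_simps)
        finally show ?thesis .
      qed
      then show ?thesis by (simp add: vec_eq_iff)
    qed
    have mk: "m \<le> k"
    proof -
      have "real m \<le> real k" using mreal ut kpos by (simp add: mult_le_cancel_left1)
      then show ?thesis by simp
    qed
    define k' where "k' = k - m"
    have "(a', k') \<in> Mset (convex hull S0)"
    proof (cases "k' = 0")
      case True
      then have "real m = real k" using mk by (simp add: k'_def)
      then have "u t = 1" using mreal kpos by simp
      then have "sum u S0 = 0" using usplit by simp
      then have "\<forall>x\<in>S0. u x = 0" using sum_nonneg_eq_0_iff[OF finS0] u(1) by (auto simp: S0_def)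
      then have "z = 0" by (simp add: z_def)
      then have "a' = (\<lambda>_. 0)" using ofva' ofv_zero_iff[of a'] by simp
      then show ?thesis using True Mset.zero by simp
    next
      case False
      define c where "c = real k / real k'"
      have k'r: "real k' = real k - real m" using mk by (simp add: k'_def of_nat_diff)
      have s0: "sum u S0 = 1 - u t" using usplit by simp
      have "real k * sum u S0 = real k - real k * u t" by (simp add: s0 right_diff_distrib)
      then have "real k * sum u S0 = real k'" using mreal k'r by simp
      then have "c * sum u S0 = 1"
        using False by (simp add: c_def)
      then have w: "c *\<^sub>R z \<in> convex hull S0"
        unfolding convex_hull_finite[OF finS0] z_def
        using u(1) kpos
        by (intro CollectI exI[of _ "\<lambda>x. c * u x"]) (auto simp: S0_def c_def sum_distrib_left scaleR_sum_right)
      have "ofv a' = real k' *\<^sub>R (c *\<^sub>R z)" using ofva' False by (simp add: c_def)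
      then have "ofv a' \<in> (\<lambda>x. real k' *\<^sub>R x) ` (convex hull S0)" using w by (intro image_eqI)
      then have "(a', k') \<in> Eset (convex hull S0)" by (simp add: Eset_def)
      then show ?thesis using IH by (auto simp: S0_def)
    qed
    then have "(a', k') \<in> Mset (convex hull S)"
      by (rule Mset_mono) (use hull_mono[of "S - {t}" S] in \<open>auto simp: S0_def\<close>)
    then have "((\<lambda>j. a' j + m * bt j), k' + m) \<in> Mset (convex hull S)"
      by (rule Mset_rep) (simp add: bt tS hull_inc)
    then show ?thesis using a'eq mk by (simp add: k'_def)
  qed
qed

lemma pyr_iff: "Eset (convex hull S) \<subseteq> Mset (convex hull S) \<longleftrightarrow>
   Eset (convex hull (S - {t})) \<subseteq> Mset (convex hull (S - {t}))"
  using dir1 dir2 by blast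

end

lemma vv_nth: "vertex_vec f w $ x = (if w \<in> f x then 1 else 0)"
  by (simp add: vertex_vec_def)

lemma vv_lat: "\<exists>b. ofv b = vertex_vec f w"
  by (intro exI[of _ "\<lambda>x. if w \<in> f x then 1 else 0"]) (simp add: ofv_def vertex_vec_def vec_eq_iff)

lemma remove_closed:
  fixes f :: "'n::finite \<Rightarrow> 'v set"
  assumes "finite D" "\<forall>v\<in>D. closed_vertex f v" "finite W0" "W0 \<inter> D = {}"
  shows "Eset (convex hull (vertex_vec f ` (W0 \<union> D))) \<subseteq> Mset (convex hull (vertex_vec f ` (W0 \<union> D)))
     \<longleftrightarrow> Eset (convex hull (vertex_vec f ` W0)) \<subseteq> Mset (convex hull (vertex_vec f ` W0))"
  using assms
proof (induction D rule: finite_induct)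
  case empty then show ?case by simp
next
  case (insert v D)
  obtain x where fx: "f x = {v}" using insert.prems unfolding closed_vertex_def hg_edges_def by auto
  let ?S = "vertex_vec f ` (W0 \<union> insert v D)"
  interpret p: pyr ?S "vertex_vec f v" x
  proof
    show "finite ?S" using insert by simp
    show "vertex_vec f v \<in> ?S" by simp
    show "vertex_vec f v $ x = 1" by (simp add: vv_nth fx)
    show "s $ x = 0" if "s \<in> ?S" "s \<noteq> vertex_vec f v" for s
      using that by (auto simp: vv_nth fx)
    show "\<exists>b. ofv b = s" if "s \<in> ?S" for s using that vv_lat by auto
  qed
  have eq: "?S - {vertex_vec f v} = vertex_vec f ` (W0 \<union> D)"
  proof
    show "?S - {vertex_vec f v} \<subseteq> vertex_vec f ` (W0 \<union> D)" by auto
    show "vertex_vec f ` (W0 \<union> D) \<subseteq> ?S - {vertex_vec f v}"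
    proof
      fix s assume "s \<in> vertex_vec f ` (W0 \<union> D)"
      then obtain w where w: "w \<in> W0 \<union> D" "s = vertex_vec f w" by auto
      then have "w \<noteq> v" using insert by auto
      then have "s $ x = 0" using w by (simp add: vv_nth fx)
      then have "s \<noteq> vertex_vec f v" by (auto simp: vv_nth fx)
      then show "s \<in> ?S - {vertex_vec f v}" using w by auto
    qed
  qed
  have "W0 \<inter> D = {}" using insert by auto
  then show ?case using p.pyr_iff insert eq by simp
qed

theorem proposition3p3:
  fixes V :: "'v set" and f :: "'n::finite \<Rightarrow> 'v set" and W :: "'v set"
  assumes "labeled_hypergraph V f"
    and "separated V f"
    and "W = {v \<in> V. \<not> closed_vertex f v}"
  shows "(ehrhart_ring (hg_polytope V f) = (polytopal_ring (hg_polytope V f) :: ('n, 'k::field) Spoly set))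
     \<longleftrightarrow> (ehrhart_ring (hg_polytope W (induced f W)) = (polytopal_ring (hg_polytope W (induced f W)) :: ('n, 'k) Spoly set))"
proof -
  define D where "D = {v \<in> V. closed_vertex f v}"
  have finV: "finite V" using assms(1) by (simp add: labeled_hypergraph_def)
  have VWD: "V = W \<union> D" using assms(3) by (auto simp: D_def)
  have img: "vertex_vec (induced f W) ` W = vertex_vec f ` W"
    by (intro image_cong refl) (simp add: vertex_vec_def induced_def vec_eq_iff)
  have "(ehrhart_ring (hg_polytope V f) = (polytopal_ring (hg_polytope V f) :: ('n, 'k::field) Spoly set))
     \<longleftrightarrow> Eset (convex hull (vertex_vec f ` (W \<union> D))) \<subseteq> Mset (convex hull (vertex_vec f ` (W \<union> D)))"
    unfolding hg_polytope_def VWD by (rule ring_iff) (rule convex_convex_hull)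
  also have "\<dots> \<longleftrightarrow> Eset (convex hull (vertex_vec f ` W)) \<subseteq> Mset (convex hull (vertex_vec f ` W))"
    by (rule remove_closed) (use finV assms(3) in \<open>auto simp: D_def\<close>)
  also have "\<dots> \<longleftrightarrow> (ehrhart_ring (hg_polytope W (induced f W)) = (polytopal_ring (hg_polytope W (induced f W)) :: ('n, 'k) Spoly set))"
    unfolding hg_polytope_def img by (rule ring_iff[symmetric]) (rule convex_convex_hull)
  finally show ?thesis .
qed

end
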